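(* Let $(X,d)$ be a u.l.f. metric space and $h\colon X\to\mathbb{R}$ a map, and let $\sigma_h$ be given by $\sigma_{h,t}(a)=e^{it\bar h}ae^{-it\bar h}$ for $t\in\mathbb{R}$ and $a\in\mathrm{C}^*_u(X)$. (1) If $h$ is bounded, then every element of $\mathrm{C}^*_u(X)$ is analytic for $\sigma_h$. (2) If $h$ is coarse, then every element of $\mathrm{C}^*_u[X]$ is analytic for $\sigma_h$.
   Context: A metric space $(X,d)$ is uniformly locally finite (u.l.f.) if for every $r>0$ the cardinalities of the balls of radius $r$ are uniformly bounded by a finite number. Let $(\delta_x)_{x\in X}$ be the canonical orthonormal basis of $\ell_2(X)$ and for $a\in\mathcal{B}(\ell_2(X))$ write $a_{x,y}=\langle a\delta_y,\delta_x\rangle$. The propagation of $a$ is $\sup\{d(x,y): a_{x,y}\neq 0\}$. $\mathrm{C}^*_u[X]$ is the $^*$-algebra of all operators on $\ell_2(X)$ of finite propagation and $\mathrm{C}^*_u(X)$ (the uniform Roe algebra) is its norm closure. A map $h\colon X\to\mathbb{R}$ is coarse if for every $r>0$ there is $s>0$ such that $d(x,y)<r$ implies $|h(x)-h(y)|<s$. $\bar h$ denotes the diagonal multiplication operator by $h$ (i.e., $\bar h\delta_x=h(x)\delta_x$), and $e^{it\bar h}$ is the diagonal unitary $\delta_x\mapsto e^{ith(x)}\delta_x$. An element $b$ is analytic for a one-parameter group of automorphisms $\sigma$ if $t\mapsto\sigma_t(b)$ extends to an entire analytic map $\mathbb{C}\to\mathrm{C}^*_u(X)$. *)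

theory Defs
  imports "HOL-Analysis.Analysis"
begin

text \<open>The metric space X is a type of class metric_space. Operators on l2(X) are
represented by their matrices a x y = <a delta_y, delta_x>.\<close>

definition ulf :: "'x::metric_space itself \<Rightarrow> bool" where
  "ulf _ \<longleftrightarrow> (\<forall>r>0. \<exists>N::nat. \<forall>x::'x. finite (cball x r) \<and> card (cball x r) \<le> N)"

definition l2 :: "('x \<Rightarrow> complex) \<Rightarrow> bool" where
  "l2 f \<longleftrightarrow> (\<lambda>x. (cmod (f x))^2) summable_on UNIV"

definition l2norm :: "('x \<Rightarrow> complex) \<Rightarrow> real" where
  "l2norm f = sqrt (infsum (\<lambda>x. (cmod (f x))^2) UNIV)"

definition mat_apply :: "('x \<Rightarrow> 'x \<Rightarrow> complex) \<Rightarrow> ('x \<Rightarrow> complex) \<Rightarrow> ('x \<Rightarrow> complex)" where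
  "mat_apply a f = (\<lambda>x. infsum (\<lambda>y. a x y * f y) UNIV)"

definition bounded_op :: "('x \<Rightarrow> 'x \<Rightarrow> complex) \<Rightarrow> bool" where
  "bounded_op a \<longleftrightarrow> (\<exists>C. \<forall>f. l2 f \<longrightarrow>
      (\<forall>x. (\<lambda>y. a x y * f y) summable_on UNIV) \<and> l2 (mat_apply a f) \<and>
      l2norm (mat_apply a f) \<le> C * l2norm f)"

definition op_norm :: "('x \<Rightarrow> 'x \<Rightarrow> complex) \<Rightarrow> real" where
  "op_norm a = Sup {l2norm (mat_apply a f) | f. l2 f \<and> l2norm f \<le> 1}"

definition finite_prop :: "('x::metric_space \<Rightarrow> 'x \<Rightarrow> complex) \<Rightarrow> bool" where
  "finite_prop a \<longleftrightarrow> (\<exists>r. \<forall>x y. a x y \<noteq> 0 \<longrightarrow> dist x y \<le> r)"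

definition roe_alg :: "('x::metric_space \<Rightarrow> 'x \<Rightarrow> complex) set" where
  "roe_alg = {a. bounded_op a \<and> finite_prop a}"

definition uroe :: "('x::metric_space \<Rightarrow> 'x \<Rightarrow> complex) set" where
  "uroe = {a. bounded_op a \<and>
      (\<forall>e>0. \<exists>b\<in>roe_alg. op_norm (\<lambda>x y. a x y - b x y) < e)}"

definition coarse_map :: "('x::metric_space \<Rightarrow> real) \<Rightarrow> bool" where
  "coarse_map h \<longleftrightarrow> (\<forall>r>0. \<exists>s>0. \<forall>x y. dist x y < r \<longrightarrow> \<bar>h x - h y\<bar> < s)"

text \<open>sigma_{h,t}(a) = e^{it h} a e^{-it h}, written out on matrix entries\<close>
definition sigma :: "('x \<Rightarrow> real) \<Rightarrow> real \<Rightarrow> ('x \<Rightarrow> 'x \<Rightarrow> complex) \<Rightarrow> ('x \<Rightarrow> 'x \<Rightarrow> complex)" where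
  "sigma h t a = (\<lambda>x y. exp (\<i> * complex_of_real (t * h x)) * a x y
                        * exp (- \<i> * complex_of_real (t * h y)))"

text \<open>b is analytic for sigma_h: t \<mapsto> sigma_{h,t}(b) extends to an entire map
  C \<rightarrow> C*_u(X), i.e. complex differentiable at every point in operator norm.\<close>
definition analytic_for :: "('x::metric_space \<Rightarrow> real) \<Rightarrow> ('x \<Rightarrow> 'x \<Rightarrow> complex) \<Rightarrow> bool" where
  "analytic_for h b \<longleftrightarrow> (\<exists>F :: complex \<Rightarrow> ('x \<Rightarrow> 'x \<Rightarrow> complex).
      (\<forall>z. F z \<in> uroe) \<and>
      (\<forall>t::real. F (complex_of_real t) = sigma h t b) \<and>
      (\<forall>z. \<exists>D\<in>uroe.
         ((\<lambda>w. op_norm (\<lambda>x y. (F (z + w) x y - F z x y) / w - D x y)) \<longlongrightarrow> 0) (at 0)))"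

end

theory Submission
  imports Defs
begin


lemma l2_zero: "l2 (\<lambda>_. 0)" "l2norm (\<lambda>_. 0) = 0"
  by (auto simp: l2_def l2norm_def)

lemma l2norm_nonneg: "l2norm f \<ge> 0"
  unfolding l2norm_def by (simp add: infsum_nonneg)

lemma l2_bound:
  assumes "l2 g" "\<And>x. cmod (k x) \<le> U * cmod (g x)" "U \<ge> 0"
  shows "l2 k" "l2norm k \<le> U * l2norm g"
proof -
  have s: "(\<lambda>x. U^2 * (cmod (g x))^2) summable_on UNIV"
    using assms(1) unfolding l2_def by (rule summable_on_cmult_right)
  have le: "(cmod (k x))^2 \<le> U^2 * (cmod (g x))^2" for x
  proof -
    have "(cmod (k x))^2 \<le> (U * cmod (g x))^2"
      using assms(2)[of x] by (intro power_mono) auto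
    then show ?thesis by (simp add: power_mult_distrib)
  qed
  have sk: "(\<lambda>x. (cmod (k x))^2) summable_on UNIV"
    by (rule summable_on_comparison_test[OF s]) (use le in auto)
  then show "l2 k" unfolding l2_def .
  have "infsum (\<lambda>x. (cmod (k x))^2) UNIV \<le> infsum (\<lambda>x. U^2 * (cmod (g x))^2) UNIV"
    by (rule infsum_mono[OF sk s]) (use le in auto)
  also have "\<dots> = U^2 * infsum (\<lambda>x. (cmod (g x))^2) UNIV"
    by (rule infsum_cmult_right) (use assms(1) in \<open>auto simp: l2_def\<close>)
  finally have "sqrt (infsum (\<lambda>x. (cmod (k x))^2) UNIV) \<le> sqrt (U^2 * infsum (\<lambda>x. (cmod (g x))^2) UNIV)"
    by (rule real_sqrt_le_mono)
  then show "l2norm k \<le> U * l2norm g"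
    using assms(3) by (simp add: l2norm_def real_sqrt_mult)
qed

lemma finite_le_infsum:
  fixes f :: "'a \<Rightarrow> real"
  assumes "f summable_on UNIV" "\<And>x. f x \<ge> 0" "finite F"
  shows "sum f F \<le> infsum f UNIV"
proof -
  have "infsum f F \<le> infsum f UNIV"
    by (rule infsum_mono_neutral) (use assms in auto)
  then show ?thesis using assms(3) by simp
qed

lemma l2norm_point:
  assumes "l2 f" shows "cmod (f x) \<le> l2norm f"
proof -
  have "(cmod (f x))^2 \<le> infsum (\<lambda>x. (cmod (f x))^2) UNIV"
    using finite_le_infsum[of "\<lambda>x. (cmod (f x))^2" "{x}"] assms by (auto simp: l2_def)
  then show ?thesis unfolding l2norm_def using real_le_rsqrt by blast
qed

lemma l2norm_zero:
  assumes "l2 f" "l2norm f = 0" shows "f x = 0"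
  using l2norm_point[OF assms(1), of x] assms(2) by simp

lemma l2_add:
  assumes "l2 f" "l2 g"
  shows "l2 (\<lambda>x. f x + g x)" "l2norm (\<lambda>x. f x + g x) \<le> l2norm f + l2norm g"
proof -
  have sf: "(\<lambda>x. (cmod (f x))^2) summable_on UNIV" and sg: "(\<lambda>x. (cmod (g x))^2) summable_on UNIV"
    using assms by (auto simp: l2_def)
  have s2: "(\<lambda>x. 2 * (cmod (f x))^2 + 2 * (cmod (g x))^2) summable_on UNIV"
    by (intro summable_on_add summable_on_cmult_right sf sg)
  have le: "(cmod (f x + g x))^2 \<le> 2 * (cmod (f x))^2 + 2 * (cmod (g x))^2" for x
  proof -
    have "(cmod (f x + g x))^2 \<le> (cmod (f x) + cmod (g x))^2"
      by (intro power_mono norm_triangle_ineq) auto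
    also have "\<dots> \<le> 2 * (cmod (f x))^2 + 2 * (cmod (g x))^2"
      by (smt (verit) sum_squares_bound power2_sum)
    finally show ?thesis .
  qed
  have s: "(\<lambda>x. (cmod (f x + g x))^2) summable_on UNIV"
    by (rule summable_on_comparison_test[OF s2]) (use le in auto)
  then show "l2 (\<lambda>x. f x + g x)" unfolding l2_def .
  have "infsum (\<lambda>x. (cmod (f x + g x))^2) UNIV \<le> (l2norm f + l2norm g)^2"
  proof (rule infsum_le_finite_sums[OF s])
    fix F :: "'a set" assume F: "finite F"
    have "L2_set (\<lambda>x. cmod (f x + g x)) F \<le> L2_set (\<lambda>x. cmod (f x) + cmod (g x)) F"
      by (rule L2_set_mono) (auto intro: norm_triangle_ineq)
    also have "\<dots> \<le> L2_set (\<lambda>x. cmod (f x)) F + L2_set (\<lambda>x. cmod (g x)) F"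
      by (rule L2_set_triangle_ineq)
    also have "\<dots> \<le> l2norm f + l2norm g"
      unfolding L2_set_def l2norm_def
      by (intro add_mono real_sqrt_le_mono finite_le_infsum F sf sg) auto
    finally have "sqrt (sum (\<lambda>x. (cmod (f x + g x))^2) F) \<le> l2norm f + l2norm g"
      unfolding L2_set_def .
    then show "sum (\<lambda>x. (cmod (f x + g x))^2) F \<le> (l2norm f + l2norm g)^2"
      by (metis real_sqrt_le_iff real_sqrt_unique sum_nonneg zero_le_power2 abs_of_nonneg real_sqrt_abs sqrt_le_D)
  qed
  then have "sqrt (infsum (\<lambda>x. (cmod (f x + g x))^2) UNIV) \<le> l2norm f + l2norm g"
    using l2norm_nonneg[of f] l2norm_nonneg[of g] real_le_lsqrt by (metis add_nonneg_nonneg real_sqrt_le_iff real_sqrt_unique)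
  then show "l2norm (\<lambda>x. f x + g x) \<le> l2norm f + l2norm g" unfolding l2norm_def .
qed



lemma mat_apply_scale:
  "mat_apply a (\<lambda>y. c * f y) = (\<lambda>x. c * mat_apply a f x)"
proof -
  have "infsum (\<lambda>y. a x y * (c * f y)) UNIV = c * infsum (\<lambda>y. a x y * f y) UNIV" for x
  proof -
    have "infsum (\<lambda>y. a x y * (c * f y)) UNIV = infsum (\<lambda>y. c * (a x y * f y)) UNIV"
      by (simp add: algebra_simps)
    also have "\<dots> = c * infsum (\<lambda>y. a x y * f y) UNIV" by (rule infsum_cmult_right')
    finally show ?thesis .
  qed
  then show ?thesis unfolding mat_apply_def by auto
qed

lemma mat_apply_zero: "mat_apply a (\<lambda>_. 0) = (\<lambda>_. 0)"
  unfolding mat_apply_def by simp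

definition opset :: "('x \<Rightarrow> 'x \<Rightarrow> complex) \<Rightarrow> real set" where
  "opset a = {l2norm (mat_apply a f) | f. l2 f \<and> l2norm f \<le> 1}"

lemma opset_ne: "l2norm (mat_apply a (\<lambda>_. 0)) \<in> opset a"
  unfolding opset_def by (intro CollectI exI[of _ "\<lambda>_. 0"]) (simp add: l2_zero)

lemma opset_bdd:
  assumes "bounded_op a" shows "bdd_above (opset a)"
proof -
  obtain C where C: "\<And>f. l2 f \<Longrightarrow> l2norm (mat_apply a f) \<le> C * l2norm f"
    using assms unfolding bounded_op_def by blast
  have "t \<le> max C 0" if tin: "t \<in> opset a" for t
  proof -
    obtain f where f: "t = l2norm (mat_apply a f)" "l2 f" "l2norm f \<le> 1"
      using tin by (auto simp: opset_def)
    have "t \<le> C * l2norm f" using C f by auto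
    also have "\<dots> \<le> max C 0 * l2norm f" by (intro mult_right_mono l2norm_nonneg) auto
    also have "\<dots> \<le> max C 0" using f(3) l2norm_nonneg[of f]
      by (simp add: mult_left_le)
    finally show ?thesis .
  qed
  then show ?thesis unfolding bdd_above_def by blast
qed

lemma op_norm_nonneg:
  assumes "bounded_op a" shows "op_norm a \<ge> 0"
proof -
  have "l2norm (mat_apply a (\<lambda>_. 0)) \<le> op_norm a"
    unfolding op_norm_def using cSup_upper[OF opset_ne opset_bdd[OF assms]] by (simp add: opset_def)
  then show ?thesis using l2norm_nonneg order_trans by blast
qed

lemma op_norm_bound:
  assumes "bounded_op a" "l2 f"
  shows "l2norm (mat_apply a f) \<le> op_norm a * l2norm f"
proof (cases "l2norm f = 0")
  case True
  then have "f = (\<lambda>_. 0)" using l2norm_zero[OF assms(2)] by auto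
  then show ?thesis using True by (simp add: mat_apply_zero l2_zero)
next
  case False
  define L where "L = l2norm f"
  have L: "L > 0" using False l2norm_nonneg[of f] unfolding L_def by auto
  define g where "g = (\<lambda>y. complex_of_real (1/L) * f y)"
  have gb: "cmod (g x) \<le> (1/L) * cmod (f x)" for x
    using L by (simp add: g_def norm_mult norm_divide)
  have g: "l2 g" "l2norm g \<le> (1/L) * l2norm f"
    using l2_bound[OF assms(2) gb] L by auto
  have g1: "l2norm g \<le> 1" using g(2) L unfolding L_def by simp
  have mg: "mat_apply a g = (\<lambda>x. complex_of_real (1/L) * mat_apply a f x)"
    unfolding g_def by (rule mat_apply_scale)
  have lg: "l2 (mat_apply a g)" using assms(1) g(1) unfolding bounded_op_def by blast
  have "mat_apply a f x = complex_of_real L * mat_apply a g x" for x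
    using L by (simp add: mg)
  then have "cmod (mat_apply a f x) \<le> L * cmod (mat_apply a g x)" for x
    using L by (simp add: norm_mult)
  then have "l2norm (mat_apply a f) \<le> L * l2norm (mat_apply a g)"
    using l2_bound(2)[OF lg, of "mat_apply a f" L] L by simp
  also have "l2norm (mat_apply a g) \<le> op_norm a"
    unfolding op_norm_def using cSup_upper[OF _ opset_bdd[OF assms(1)]] g(1) g1
    by (auto simp: opset_def)
  finally show ?thesis using L unfolding L_def by (simp add: mult.commute mult_left_mono)
qed

lemma bounded_opI:
  assumes "\<And>f. l2 f \<Longrightarrow> (\<forall>x. (\<lambda>y. a x y * f y) summable_on UNIV) \<and> l2 (mat_apply a f) \<and>
      l2norm (mat_apply a f) \<le> K * l2norm f"
    and "K \<ge> 0"
  shows "bounded_op a" "op_norm a \<le> K"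
proof -
  show "bounded_op a" unfolding bounded_op_def using assms(1) by blast
  have "t \<le> K" if tin: "t \<in> opset a" for t
  proof -
    obtain f where f: "t = l2norm (mat_apply a f)" "l2 f" "l2norm f \<le> 1"
      using tin by (auto simp: opset_def)
    have "t \<le> K * l2norm f" using assms(1) f by auto
    also have "\<dots> \<le> K" using f(3) assms(2) l2norm_nonneg[of f] by (simp add: mult_left_le)
    finally show ?thesis .
  qed
  then show "op_norm a \<le> K" unfolding op_norm_def
    using cSup_least[OF _] opset_ne by (metis empty_iff opset_def)
qed



lemma bounded_opD:
  assumes "bounded_op a" "l2 f"
  shows "l2 (mat_apply a f)" "(\<lambda>y. a x y * f y) summable_on UNIV"
  using assms unfolding bounded_op_def by auto

definition delta :: "'x \<Rightarrow> 'x \<Rightarrow> complex" where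
  "delta y = (\<lambda>z. if z = y then 1 else 0)"

lemma delta_l2: "l2 (delta y)" "l2norm (delta y) = 1"
proof -
  have e: "(\<lambda>z. (cmod (delta y z))^2) = (\<lambda>z. if z = y then 1 else 0)"
    by (rule ext) (simp add: delta_def)
  have "(\<lambda>z. if z = y then (1::real) else 0) summable_on UNIV \<longleftrightarrow> (\<lambda>z. if z = y then (1::real) else 0) summable_on {y}"
    by (rule summable_on_cong_neutral) auto
  then show "l2 (delta y)" unfolding l2_def e by simp
  have "infsum (\<lambda>z. if z = y then (1::real) else 0) UNIV = infsum (\<lambda>z. if z = y then (1::real) else 0) {y}"
    by (rule infsum_cong_neutral) auto
  then show "l2norm (delta y) = 1" unfolding l2norm_def e by simp
qed

lemma mat_apply_delta: "mat_apply a (delta y) x = a x y"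
proof -
  have "infsum (\<lambda>z. a x z * delta y z) UNIV = infsum (\<lambda>z. a x z * delta y z) {y}"
    by (rule infsum_cong_neutral) (auto simp: delta_def)
  also have "\<dots> = a x y" by (simp add: delta_def)
  finally show ?thesis unfolding mat_apply_def .
qed

lemma entry_bound:
  assumes "bounded_op a" shows "cmod (a x y) \<le> op_norm a"
proof -
  have l: "l2 (mat_apply a (delta y))" by (rule bounded_opD(1)[OF assms delta_l2(1)])
  have "cmod (a x y) \<le> l2norm (mat_apply a (delta y))"
    using l2norm_point[OF l, of x] unfolding mat_apply_delta .
  also have "\<dots> \<le> op_norm a" using op_norm_bound[OF assms delta_l2(1), of y] unfolding delta_l2(2) by simp
  finally show ?thesis .
qed


lemma bounded_scale:
  assumes a: "bounded_op a" and u: "\<And>x. cmod (u x) \<le> U" and v: "\<And>y. cmod (v y) \<le> V"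
  shows "bounded_op (\<lambda>x y. u x * a x y * v y)" "op_norm (\<lambda>x y. u x * a x y * v y) \<le> U * V * op_norm a"
proof -
  have U0: "U \<ge> 0" using u order_trans norm_ge_zero by blast
  have V0: "V \<ge> 0" using v order_trans norm_ge_zero by blast
  have A0: "op_norm a \<ge> 0" using op_norm_nonneg[OF a] .
  have *: "(\<forall>x. (\<lambda>y. u x * a x y * v y * f y) summable_on UNIV) \<and> l2 (mat_apply (\<lambda>x y. u x * a x y * v y) f) \<and>
      l2norm (mat_apply (\<lambda>x y. u x * a x y * v y) f) \<le> (U * V * op_norm a) * l2norm f" if f: "l2 f" for f
  proof -
    define g where "g = (\<lambda>y. v y * f y)"
    have gb: "cmod (g y) \<le> V * cmod (f y)" for y
      unfolding g_def norm_mult by (rule mult_right_mono[OF v]) simp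
    have g: "l2 g" "l2norm g \<le> V * l2norm f"
      using l2_bound[OF f gb V0] by auto
    have rows: "(\<lambda>y. a x y * g y) summable_on UNIV" for x by (rule bounded_opD(2)[OF a g(1)])
    have eq: "(\<lambda>y. u x * a x y * v y * f y) = (\<lambda>y. u x * (a x y * g y))" for x
      by (auto simp: g_def algebra_simps)
    have r: "\<forall>x. (\<lambda>y. u x * a x y * v y * f y) summable_on UNIV"
      using summable_on_cmult_right[OF rows] eq by metis
    have m: "mat_apply (\<lambda>x y. u x * a x y * v y) f = (\<lambda>x. u x * mat_apply a g x)"
      unfolding mat_apply_def eq by (simp add: infsum_cmult_right')
    have lg: "l2 (mat_apply a g)" by (rule bounded_opD(1)[OF a g(1)])
    have ub: "cmod (u x * mat_apply a g x) \<le> U * cmod (mat_apply a g x)" for x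
      unfolding norm_mult by (rule mult_right_mono[OF u]) simp
    have b: "l2 (\<lambda>x. u x * mat_apply a g x)" "l2norm (\<lambda>x. u x * mat_apply a g x) \<le> U * l2norm (mat_apply a g)"
      using l2_bound[OF lg ub U0] by auto
    have "l2norm (\<lambda>x. u x * mat_apply a g x) \<le> U * (op_norm a * l2norm g)"
      using b(2) op_norm_bound[OF a g(1)] U0 by (meson mult_left_mono order_trans)
    also have "\<dots> \<le> U * (op_norm a * (V * l2norm f))"
      using g(2) U0 A0 by (intro mult_left_mono) auto
    finally show ?thesis using r b m by (simp add: algebra_simps)
  qed
  show "bounded_op (\<lambda>x y. u x * a x y * v y)" "op_norm (\<lambda>x y. u x * a x y * v y) \<le> U * V * op_norm a"
    using bounded_opI[of "\<lambda>x y. u x * a x y * v y" "U * V * op_norm a"] * U0 V0 A0 by auto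
qed

lemma bounded_add:
  assumes a: "bounded_op a" and b: "bounded_op b"
  shows "bounded_op (\<lambda>x y. a x y + b x y)" "op_norm (\<lambda>x y. a x y + b x y) \<le> op_norm a + op_norm b"
proof -
  have *: "(\<forall>x. (\<lambda>y. (a x y + b x y) * f y) summable_on UNIV) \<and> l2 (mat_apply (\<lambda>x y. a x y + b x y) f) \<and>
      l2norm (mat_apply (\<lambda>x y. a x y + b x y) f) \<le> (op_norm a + op_norm b) * l2norm f" if f: "l2 f" for f
  proof -
    have ra: "(\<lambda>y. a x y * f y) summable_on UNIV" and rb: "(\<lambda>y. b x y * f y) summable_on UNIV" for x
      by (rule bounded_opD(2)[OF a f], rule bounded_opD(2)[OF b f])
    have r: "(\<lambda>y. (a x y + b x y) * f y) summable_on UNIV" for x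
      using summable_on_add[OF ra rb] by (simp add: distrib_right)
    have m: "mat_apply (\<lambda>x y. a x y + b x y) f = (\<lambda>x. mat_apply a f x + mat_apply b f x)"
      unfolding mat_apply_def using infsum_add[OF ra rb] by (simp add: distrib_right)
    have la: "l2 (mat_apply a f)" and lb: "l2 (mat_apply b f)" by (rule bounded_opD(1)[OF a f], rule bounded_opD(1)[OF b f])
    have "l2norm (mat_apply (\<lambda>x y. a x y + b x y) f) \<le> l2norm (mat_apply a f) + l2norm (mat_apply b f)"
      unfolding m by (rule l2_add(2)[OF la lb])
    also have "\<dots> \<le> (op_norm a + op_norm b) * l2norm f"
      using op_norm_bound[OF a f] op_norm_bound[OF b f] by (simp add: distrib_right)
    finally show ?thesis using r m l2_add(1)[OF la lb] by auto
  qed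
  show "bounded_op (\<lambda>x y. a x y + b x y)" "op_norm (\<lambda>x y. a x y + b x y) \<le> op_norm a + op_norm b"
    using bounded_opI[of "\<lambda>x y. a x y + b x y" "op_norm a + op_norm b"] * op_norm_nonneg[OF a] op_norm_nonneg[OF b]
    by auto
qed



lemma row_finite:
  fixes a :: "'x::metric_space \<Rightarrow> 'x \<Rightarrow> complex"
  assumes band: "\<And>x y. a x y \<noteq> 0 \<Longrightarrow> dist x y \<le> r" and fin: "finite (cball x r)"
  shows "(\<lambda>y. a x y * f y) summable_on UNIV" "mat_apply a f x = (\<Sum>y\<in>cball x r. a x y * f y)"
proof -
  have "(\<lambda>y. a x y * f y) summable_on UNIV \<longleftrightarrow> (\<lambda>y. a x y * f y) summable_on cball x r"
    by (rule summable_on_cong_neutral) (use band in \<open>auto simp: mem_cball\<close>)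
  then show "(\<lambda>y. a x y * f y) summable_on UNIV" using fin by simp
  have "infsum (\<lambda>y. a x y * f y) UNIV = infsum (\<lambda>y. a x y * f y) (cball x r)"
    by (rule infsum_cong_neutral) (use band in \<open>auto simp: mem_cball\<close>)
  also have "\<dots> = (\<Sum>y\<in>cball x r. a x y * f y)" using fin by simp
  finally show "mat_apply a f x = (\<Sum>y\<in>cball x r. a x y * f y)" unfolding mat_apply_def .
qed

lemma band_bounded:
  assumes ulf: "ulf TYPE('x::metric_space)"
  shows "\<exists>N::real. N \<ge> 0 \<and> (\<forall>(a::'x\<Rightarrow>'x\<Rightarrow>complex) K. K \<ge> 0 \<longrightarrow> (\<forall>x y. a x y \<noteq> 0 \<longrightarrow> dist x y \<le> r) \<longrightarrow>
      (\<forall>x y. cmod (a x y) \<le> K) \<longrightarrow> bounded_op a \<and> op_norm a \<le> K * N)"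
proof -
  define R where "R = max r 1"
  obtain Nn :: nat where Nn: "\<And>x::'x. finite (cball x R) \<and> card (cball x R) \<le> Nn"
    using ulf unfolding ulf_def R_def by (meson less_max_iff_disj zero_less_one)
  have main: "bounded_op a \<and> op_norm a \<le> K * real Nn"
    if K: "K \<ge> 0" and band0: "\<And>x y. a x y \<noteq> 0 \<Longrightarrow> dist x y \<le> r" and ent: "\<And>x y. cmod (a x y) \<le> K"
    for a :: "'x\<Rightarrow>'x\<Rightarrow>complex" and K
  proof -
    have band: "\<And>x y. a x y \<noteq> 0 \<Longrightarrow> dist x y \<le> R" using band0 unfolding R_def by force
    have fin: "finite (cball x R)" for x :: 'x using Nn by blast
    have card: "card (cball x R) \<le> Nn" for x :: 'x using Nn by blast
    have *: "(\<forall>x. (\<lambda>y. a x y * f y) summable_on UNIV) \<and> l2 (mat_apply a f) \<and>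
      l2norm (mat_apply a f) \<le> (K * real Nn) * l2norm f" if f: "l2 f" for f
    proof -
      define g where "g = (\<lambda>y. (cmod (f y))^2)"
      have sg: "g summable_on UNIV" using f unfolding l2_def g_def .
      have g0: "g y \<ge> 0" for y unfolding g_def by simp
      define S where "S = infsum g UNIV"
      have rows: "\<forall>x. (\<lambda>y. a x y * f y) summable_on UNIV" using row_finite(1)[OF band fin] by blast
      have pt: "(cmod (mat_apply a f x))^2 \<le> K^2 * real Nn * (\<Sum>y\<in>cball x R. g y)" for x
      proof -
        have eq: "mat_apply a f x = (\<Sum>y\<in>cball x R. a x y * f y)" by (rule row_finite(2)[OF band fin])
        have "cmod (mat_apply a f x) \<le> (\<Sum>y\<in>cball x R. K * cmod (f y))"
          unfolding eq
          by (rule order_trans[OF norm_sum sum_mono]) (simp add: norm_mult ent mult_right_mono)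
        then have "(cmod (mat_apply a f x))^2 \<le> (\<Sum>y\<in>cball x R. K * cmod (f y))^2"
          by (intro power_mono) auto
        also have "\<dots> \<le> (\<Sum>y\<in>cball x R. (K * cmod (f y))^2) * card (cball x R)"
          by (rule sum_squared_le_sum_of_squares)
        also have "\<dots> = K^2 * (\<Sum>y\<in>cball x R. g y) * card (cball x R)"
          by (simp add: g_def power_mult_distrib sum_distrib_left)
        also have "\<dots> \<le> K^2 * (\<Sum>y\<in>cball x R. g y) * real Nn"
          using card[of x] by (intro mult_left_mono) (auto intro!: sum_nonneg g0 mult_nonneg_nonneg)
        finally show ?thesis by (simp add: algebra_simps)
      qed
      have fs: "(\<Sum>x\<in>F. (cmod (mat_apply a f x))^2) \<le> K^2 * (real Nn)^2 * S" if F: "finite F" for F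
      proof -
        define G where "G = (\<Union>x\<in>F. cball x R)"
        have G: "finite G" unfolding G_def using F fin by blast
        have "(\<Sum>x\<in>F. (cmod (mat_apply a f x))^2) \<le> (\<Sum>x\<in>F. K^2 * real Nn * (\<Sum>y\<in>cball x R. g y))"
          by (rule sum_mono[OF pt])
        also have "\<dots> = K^2 * real Nn * (\<Sum>x\<in>F. \<Sum>y\<in>{y\<in>G. dist x y \<le> R}. g y)"
        proof -
          have "cball x R = {y\<in>G. dist x y \<le> R}" if "x \<in> F" for x
            using that unfolding G_def by (auto simp: mem_cball)
          then show ?thesis by (simp add: sum_distrib_left)
        qed
        also have "(\<Sum>x\<in>F. \<Sum>y\<in>{y\<in>G. dist x y \<le> R}. g y) = (\<Sum>y\<in>G. \<Sum>x\<in>{x\<in>F. dist x y \<le> R}. g y)"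
          by (rule sum.swap_restrict[OF F G])
        also have "\<dots> \<le> (\<Sum>y\<in>G. real Nn * g y)"
        proof (rule sum_mono)
          fix y assume "y \<in> G"
          have sub: "{x\<in>F. dist x y \<le> R} \<subseteq> cball y R" by (auto simp: mem_cball dist_commute)
          have "card {x\<in>F. dist x y \<le> R} \<le> Nn"
            using card_mono[OF fin sub] card[of y] by linarith
          then show "(\<Sum>x\<in>{x\<in>F. dist x y \<le> R}. g y) \<le> real Nn * g y"
            using g0[of y] by (simp add: mult_right_mono)
        qed
        also have "\<dots> = real Nn * (\<Sum>y\<in>G. g y)" by (simp add: sum_distrib_left)
        also have "\<dots> \<le> real Nn * S"
          unfolding S_def by (intro mult_left_mono finite_le_infsum sg g0 G) auto
        finally show ?thesis using K
          by (smt (verit, ccfv_SIG) mult.assoc mult_left_mono of_nat_0_le_iff power2_eq_square zero_le_power2)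
      qed
      have sm: "(\<lambda>x. (cmod (mat_apply a f x))^2) summable_on UNIV"
        by (rule nonneg_bdd_above_summable_on) (use fs in \<open>auto simp: bdd_above_def\<close>)
      then have l: "l2 (mat_apply a f)" unfolding l2_def .
      have "infsum (\<lambda>x. (cmod (mat_apply a f x))^2) UNIV \<le> K^2 * (real Nn)^2 * S"
        by (rule infsum_le_finite_sums[OF sm fs]) 
      then have "l2norm (mat_apply a f) \<le> sqrt (K^2 * (real Nn)^2 * S)"
        unfolding l2norm_def by (rule real_sqrt_le_mono)
      also have "\<dots> = K * real Nn * l2norm f"
        using K unfolding l2norm_def S_def g_def by (simp add: real_sqrt_mult)
      finally show ?thesis using rows l by simp
    qed
    show ?thesis using bounded_opI[of a "K * real Nn"] * K by auto
  qed
  show ?thesis by (rule exI[of _ "real Nn"]) (use main in auto)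
qed



lemma exp_quad: "cmod (exp u - 1 - u) \<le> (cmod u)^2 * exp (cmod u)"
proof -
  have s1: "(\<lambda>k. u^(k+2) /\<^sub>R fact (k+2)) sums (exp u - (\<Sum>k<2. u^k /\<^sub>R fact k))"
    by (intro sums_split_initial_segment exp_converges)
  have e: "(\<Sum>k<2. u^k /\<^sub>R fact k) = 1 + u" by (simp add: eval_nat_numeral)
  have s1': "(\<lambda>k. u^(k+2) /\<^sub>R fact (k+2)) sums (exp u - 1 - u)" using s1 unfolding e by (simp add: algebra_simps)
  have s2: "(\<lambda>k. (cmod u)^2 * ((cmod u)^k /\<^sub>R fact k)) sums ((cmod u)^2 * exp (cmod u))"
    by (intro sums_mult exp_converges)
  have le: "norm (u^(k+2) /\<^sub>R fact (k+2)) \<le> (cmod u)^2 * ((cmod u)^k /\<^sub>R fact k)" for k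
  proof -
    have "norm (u^(k+2) /\<^sub>R fact (k+2)) = (cmod u)^(k+2) / fact (k+2)"
      by (simp only: norm_scaleR norm_power) (simp add: divide_inverse mult.commute)
    also have "\<dots> \<le> (cmod u)^(k+2) / fact k"
      by (intro divide_left_mono fact_mono) auto
    also have "\<dots> = (cmod u)^2 * ((cmod u)^k /\<^sub>R fact k)"
      by (simp add: power_add divide_inverse mult_ac power2_eq_square)
    finally show ?thesis .
  qed
  have sn: "summable (\<lambda>k. norm (u^(k+2) /\<^sub>R fact (k+2)))"
    by (rule summable_comparison_test'[OF sums_summable[OF s2]]) (use le in auto)
  have "cmod (exp u - 1 - u) = norm (\<Sum>k. u^(k+2) /\<^sub>R fact (k+2))" using s1' by (simp add: sums_iff)
  also have "\<dots> \<le> (\<Sum>k. norm (u^(k+2) /\<^sub>R fact (k+2)))" by (rule summable_norm[OF sn])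
  also have "\<dots> \<le> (\<Sum>k. (cmod u)^2 * ((cmod u)^k /\<^sub>R fact k))"
    by (rule suminf_le[OF le sn sums_summable[OF s2]])
  also have "\<dots> = (cmod u)^2 * exp (cmod u)" using s2 by (simp add: sums_iff)
  finally show ?thesis .
qed

lemma exp_lin: "cmod (exp u - 1) \<le> cmod u + (cmod u)^2 * exp (cmod u)"
proof -
  have "cmod (exp u - 1) \<le> cmod (exp u - 1 - u) + cmod u"
    by (metis diff_add_cancel norm_triangle_ineq)
  then show ?thesis using exp_quad[of u] by linarith
qed



lemma bounded_diff:
  assumes a: "bounded_op a" and b: "bounded_op b"
  shows "bounded_op (\<lambda>x y. a x y - b x y)"
proof -
  have nb: "bounded_op (\<lambda>x y. (-1) * b x y * 1)"
    by (rule bounded_scale(1)[OF b, of _ 1 _ 1]) auto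
  have "bounded_op (\<lambda>x y. a x y + (-1) * b x y * 1)" by (rule bounded_add(1)[OF a nb])
  then show ?thesis by simp
qed

lemma op_norm_zero: "op_norm (\<lambda>x y. 0) = 0"
proof -
  have m: "mat_apply (\<lambda>(x::'a) (y::'a). 0::complex) f = (\<lambda>_. 0)" for f
    by (simp add: mat_apply_def)
  have **: "\<And>f. l2 f \<Longrightarrow> (\<forall>x. (\<lambda>y. (\<lambda>(x::'a) (y::'a). 0::complex) x y * f y) summable_on UNIV) \<and>
     l2 (mat_apply (\<lambda>(x::'a) (y::'a). 0::complex) f) \<and> l2norm (mat_apply (\<lambda>(x::'a) (y::'a). 0::complex) f) \<le> 0 * l2norm f"
    unfolding m by (simp add: l2_zero)
  have *: "bounded_op (\<lambda>(x::'a) (y::'a). 0::complex)" "op_norm (\<lambda>(x::'a) (y::'a). 0::complex) \<le> 0"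
    using bounded_opI[OF **] by auto
  then show ?thesis using op_norm_nonneg[OF *(1)] by linarith
qed

lemma roe_sub_uroe: assumes b: "b \<in> roe_alg" shows "b \<in> uroe"
proof -
  have "bounded_op b" using b unfolding roe_alg_def by blast
  moreover have "op_norm (\<lambda>x y. b x y - b x y) < e" if "e > 0" for e
  proof -
    have "(\<lambda>x y. b x y - b x y) = (\<lambda>x y. 0)" by simp
    then show ?thesis using that op_norm_zero[where 'a='a] by simp
  qed
  ultimately show ?thesis unfolding uroe_def using b by blast
qed

lemma roe_algI:
  assumes "bounded_op b" "\<And>x y. b x y \<noteq> 0 \<Longrightarrow> dist x y \<le> r"
  shows "b \<in> roe_alg"
  using assms unfolding roe_alg_def finite_prop_def by blast

lemma uroeD:
  assumes "a \<in> uroe" "e > 0"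
  shows "\<exists>b\<in>roe_alg. op_norm (\<lambda>x y. a x y - b x y) < e" "bounded_op a"
  using assms unfolding uroe_def by auto

lemma uroeI:
  assumes "bounded_op a" "\<And>e. e > 0 \<Longrightarrow> \<exists>b\<in>roe_alg. op_norm (\<lambda>x y. a x y - b x y) < e"
  shows "a \<in> uroe"
  using assms unfolding uroe_def by auto

lemma roe_algD:
  assumes "b \<in> roe_alg"
  shows "bounded_op b" "\<exists>r. \<forall>x y. b x y \<noteq> 0 \<longrightarrow> dist x y \<le> r"
  using assms unfolding roe_alg_def finite_prop_def by auto

lemma uroe_scale:
  assumes a: "a \<in> uroe" and u: "\<And>x. cmod (u x) \<le> U" and v: "\<And>y. cmod (v y) \<le> V"
  shows "(\<lambda>x y. u x * a x y * v y) \<in> uroe"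
proof -
  have U0: "U \<ge> 0" using u[of undefined] norm_ge_zero[of "u undefined"] by linarith
  have V0: "V \<ge> 0" using v[of undefined] norm_ge_zero[of "v undefined"] by linarith
  have ba: "bounded_op a" using a by (simp add: uroe_def)
  show ?thesis
  proof (rule uroeI[OF bounded_scale(1)[OF ba u v]])
    fix e :: real assume e: "e > 0"
    show "\<exists>b\<in>roe_alg. op_norm (\<lambda>x y. u x * a x y * v y - b x y) < e"
  proof -
    have "U*V \<ge> 0" using U0 V0 by simp
    then have "e / (U*V+1) > 0" using e by simp
    then obtain b where b: "b \<in> roe_alg" and ab: "op_norm (\<lambda>x y. a x y - b x y) < e / (U*V+1)"
      using uroeD(1)[OF a] by blast
    have bb: "bounded_op b" using roe_algD(1)[OF b] .
    obtain r where r: "\<And>x y. b x y \<noteq> 0 \<Longrightarrow> dist x y \<le> r" using roe_algD(2)[OF b] by blast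
    have ubv: "(\<lambda>x y. u x * b x y * v y) \<in> roe_alg"
    proof (rule roe_algI[OF bounded_scale(1)[OF bb u v], where r=r])
      fix x y assume "u x * b x y * v y \<noteq> 0"
      then have "b x y \<noteq> 0" by auto
      then show "dist x y \<le> r" by (rule r)
    qed
    have bd: "bounded_op (\<lambda>x y. a x y - b x y)" by (rule bounded_diff[OF ba bb])
    have "op_norm (\<lambda>x y. u x * (a x y - b x y) * v y) \<le> U * V * op_norm (\<lambda>x y. a x y - b x y)"
      by (rule bounded_scale(2)[OF bd u v])
    also have "\<dots> \<le> (U * V + 1) * op_norm (\<lambda>x y. a x y - b x y)"
      using op_norm_nonneg[OF bd] by (intro mult_right_mono) auto
    also have "\<dots> < e"
    proof -
      have p: "U * V + 1 > 0" using \<open>U*V \<ge> 0\<close> by linarith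
      show ?thesis using ab p by (simp add: less_divide_eq mult.commute)
    qed
    finally have "op_norm (\<lambda>x y. u x * a x y * v y - u x * b x y * v y) < e"
      by (simp add: algebra_simps)
    then show ?thesis using ubv by (intro bexI[where x="\<lambda>x y. u x * b x y * v y"]) auto
  qed
qed
qed

lemma uroe_add:
  assumes a: "a \<in> uroe" and b: "b \<in> uroe"
  shows "(\<lambda>x y. a x y + b x y) \<in> uroe"
proof -
  have ba: "bounded_op a" using a by (simp add: uroe_def)
  have bb: "bounded_op b" using b by (simp add: uroe_def)
  show ?thesis
  proof (rule uroeI[OF bounded_add(1)[OF ba bb]])
  fix e :: real assume e: "e > 0"
  show "\<exists>c\<in>roe_alg. op_norm (\<lambda>x y. a x y + b x y - c x y) < e"
  proof -
    have e2: "e/2 > 0" using e by auto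
    obtain c1 where c1: "c1 \<in> roe_alg" and ac: "op_norm (\<lambda>x y. a x y - c1 x y) < e/2"
      using uroeD(1)[OF a e2] by blast
    obtain c2 where c2: "c2 \<in> roe_alg" and bc: "op_norm (\<lambda>x y. b x y - c2 x y) < e/2"
      using uroeD(1)[OF b e2] by blast
    have b1: "bounded_op c1" using roe_algD(1)[OF c1] .
    have b2: "bounded_op c2" using roe_algD(1)[OF c2] .
    obtain r1 where r1: "\<And>x y. c1 x y \<noteq> 0 \<Longrightarrow> dist x y \<le> r1" using roe_algD(2)[OF c1] by blast
    obtain r2 where r2: "\<And>x y. c2 x y \<noteq> 0 \<Longrightarrow> dist x y \<le> r2" using roe_algD(2)[OF c2] by blast
    have cc: "(\<lambda>x y. c1 x y + c2 x y) \<in> roe_alg"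
    proof (rule roe_algI[OF bounded_add(1)[OF b1 b2], where r="max r1 r2"])
      fix x y assume "c1 x y + c2 x y \<noteq> 0"
      then have "c1 x y \<noteq> 0 \<or> c2 x y \<noteq> 0" by auto
      then show "dist x y \<le> max r1 r2"
      proof
        assume "c1 x y \<noteq> 0" then have "dist x y \<le> r1" by (rule r1) then show ?thesis by linarith
      next
        assume "c2 x y \<noteq> 0" then have "dist x y \<le> r2" by (rule r2) then show ?thesis by linarith
      qed
    qed
    have d1: "bounded_op (\<lambda>x y. a x y - c1 x y)" by (rule bounded_diff[OF ba b1])
    have d2: "bounded_op (\<lambda>x y. b x y - c2 x y)" by (rule bounded_diff[OF bb b2])
    have "op_norm (\<lambda>x y. (a x y - c1 x y) + (b x y - c2 x y)) \<le> op_norm (\<lambda>x y. a x y - c1 x y) + op_norm (\<lambda>x y. b x y - c2 x y)"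
      by (rule bounded_add(2)[OF d1 d2])
    also have "\<dots> < e" using ac bc by linarith
    finally have "op_norm (\<lambda>x y. a x y + b x y - (c1 x y + c2 x y)) < e"
      by (simp add: algebra_simps)
    then show ?thesis using cc by (intro bexI[where x="\<lambda>x y. c1 x y + c2 x y"]) auto
  qed
  qed
qed

lemma tend0:
  fixes \<phi> :: "complex \<Rightarrow> real"
  assumes "\<And>w. w \<noteq> 0 \<Longrightarrow> cmod w \<le> 1 \<Longrightarrow> 0 \<le> \<phi> w \<and> \<phi> w \<le> C * cmod w"
  shows "(\<phi> \<longlongrightarrow> 0) (at 0)"
proof (rule tendsto_sandwich[of "\<lambda>_. 0" \<phi> _ "\<lambda>w. C * cmod w"])
  have ev: "eventually (\<lambda>w. w \<noteq> 0 \<and> cmod w \<le> 1) (at (0::complex))"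
    unfolding eventually_at by (rule exI[of _ 1]) auto
  show "eventually (\<lambda>w. 0 \<le> \<phi> w) (at 0)" using ev by eventually_elim (use assms in auto)
  show "eventually (\<lambda>w. \<phi> w \<le> C * cmod w) (at 0)" using ev by eventually_elim (use assms in auto)
  show "((\<lambda>_. 0) \<longlongrightarrow> 0) (at 0)" by simp
  have "((\<lambda>w. C * cmod w) \<longlongrightarrow> C * cmod (0::complex)) (at 0)" by (intro tendsto_intros)
  then show "((\<lambda>w. C * cmod w) \<longlongrightarrow> 0) (at 0)" by simp
qed



definition FF :: "('x \<Rightarrow> real) \<Rightarrow> ('x \<Rightarrow> 'x \<Rightarrow> complex) \<Rightarrow> complex \<Rightarrow> 'x \<Rightarrow> 'x \<Rightarrow> complex" where
  "FF h a z = (\<lambda>x y. exp (\<i> * z * of_real (h x)) * a x y * exp (- \<i> * z * of_real (h y)))"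

definition DD :: "('x \<Rightarrow> real) \<Rightarrow> ('x \<Rightarrow> 'x \<Rightarrow> complex) \<Rightarrow> complex \<Rightarrow> 'x \<Rightarrow> 'x \<Rightarrow> complex" where
  "DD h a z = (\<lambda>x y. \<i> * of_real (h x - h y) * FF h a z x y)"

lemma FF_real: "FF h a (of_real t) = sigma h t a"
  unfolding FF_def sigma_def by (simp add: mult.assoc)

lemma exp_split: "exp (\<i> * z * of_real c) * b * exp (- \<i> * z * of_real d) = b * exp (\<i> * z * of_real (c - d))"
proof -
  have "exp (\<i> * z * of_real c) * b * exp (- \<i> * z * of_real d) = b * (exp (\<i> * z * of_real c) * exp (- \<i> * z * of_real d))"
    by (simp add: mult_ac)
  also have "\<dots> = b * exp (\<i> * z * of_real c + - \<i> * z * of_real d)" by (simp only: exp_add)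
  also have "\<i> * z * of_real c + - \<i> * z * of_real d = \<i> * z * of_real (c - d)" by (simp add: algebra_simps)
  finally show ?thesis .
qed

lemma FF_alt: "FF h a z x y = a x y * exp (\<i> * z * of_real (h x - h y))"
  unfolding FF_def by (rule exp_split)

lemma FF_shift: "FF h a (z + w) x y = exp (\<i> * w * of_real (h x)) * FF h a z x y * exp (\<i> * w * of_real (- h y))"
proof -
  have e1: "\<i> * (z + w) * of_real (h x) = \<i> * z * of_real (h x) + \<i> * w * of_real (h x)"
    by (simp add: algebra_simps)
  have e2: "- \<i> * (z + w) * of_real (h y) = - \<i> * z * of_real (h y) + \<i> * w * of_real (- h y)"
    by (simp add: algebra_simps)
  have "exp (\<i> * (z + w) * of_real (h x)) = exp (\<i> * z * of_real (h x)) * exp (\<i> * w * of_real (h x))"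
    by (simp only: e1 exp_add)
  moreover have "exp (- \<i> * (z + w) * of_real (h y)) = exp (- \<i> * z * of_real (h y)) * exp (\<i> * w * of_real (- h y))"
    by (simp only: e2 exp_add)
  ultimately show ?thesis unfolding FF_def by (simp add: mult_ac)
qed

lemma expb:
  assumes "\<bar>c\<bar> \<le> M"
  shows "cmod (exp (\<i> * z * of_real c)) \<le> exp (cmod z * M)"
proof -
  have "cmod (exp (\<i> * z * of_real c)) \<le> exp (cmod (\<i> * z * of_real c))" by (rule norm_exp)
  also have "cmod (\<i> * z * of_real c) = cmod z * \<bar>c\<bar>" by (simp add: norm_mult)
  also have "exp (cmod z * \<bar>c\<bar>) \<le> exp (cmod z * M)" using assms by (simp add: mult_left_mono)
  finally show ?thesis .
qed

lemma quad_bound: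
  assumes w: "cmod w \<le> 1" and c: "\<bar>c\<bar> \<le> M"
  shows "cmod ((exp (\<i> * w * of_real c) - 1 - \<i> * w * of_real c) / w) \<le> cmod w * (M^2 * exp M)"
proof (cases "w = 0")
  case True then show ?thesis by simp
next
  case False
  define p where "p = \<i> * w * of_real c"
  have M0: "M \<ge> 0" using c by linarith
  have np: "cmod p = cmod w * \<bar>c\<bar>" unfolding p_def by (simp add: norm_mult)
  have np1: "cmod p \<le> M" unfolding np using w c M0
    by (metis abs_ge_zero mult_le_cancel_right1 mult_mono norm_ge_zero order_trans mult_1)
  have np2: "(cmod p)^2 \<le> (cmod w)^2 * M^2" unfolding np power_mult_distrib
    using c by (intro mult_left_mono power_mono) auto
  have "cmod (exp p - 1 - p) \<le> (cmod p)^2 * exp (cmod p)" by (rule exp_quad)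
  also have "\<dots> \<le> ((cmod w)^2 * M^2) * exp M"
    using np1 np2 by (intro mult_mono) auto
  finally have "cmod (exp p - 1 - p) / cmod w \<le> ((cmod w)^2 * M^2) * exp M / cmod w"
    using False by (simp add: divide_right_mono)
  also have "\<dots> = cmod w * (M^2 * exp M)" using False by (simp add: power2_eq_square field_simps)
  finally show ?thesis unfolding p_def by (simp add: norm_divide)
qed

lemma lin_bound:
  assumes w: "cmod w \<le> 1" and c: "\<bar>c\<bar> \<le> M"
  shows "cmod (exp (\<i> * w * of_real c) - 1) \<le> cmod w * (M + M^2 * exp M)"
proof -
  define p where "p = \<i> * w * of_real c"
  have M0: "M \<ge> 0" using c by linarith
  have q: "cmod ((exp p - 1 - p) / w) \<le> cmod w * (M^2 * exp M)" unfolding p_def by (rule quad_bound[OF w c])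
  have np: "cmod p \<le> cmod w * M" unfolding p_def using c by (simp add: norm_mult mult_left_mono)
  show ?thesis
  proof (cases "w = 0")
    case True then show ?thesis by (simp add: p_def)
  next
    case False
    have "cmod (exp p - 1 - p) = cmod ((exp p - 1 - p) / w) * cmod w" using False by (simp add: norm_divide)
    also have "\<dots> \<le> cmod w * (M^2 * exp M) * 1" using q w by (intro mult_mono) auto
    finally have "cmod (exp p - 1 - p) \<le> cmod w * (M^2 * exp M)" by simp
    moreover have "cmod (exp p - 1) \<le> cmod (exp p - 1 - p) + cmod p"
      by (metis diff_add_cancel norm_triangle_ineq)
    ultimately show ?thesis using np unfolding p_def by (simp add: algebra_simps)
  qed
qed



lemma part2:
  assumes ulf: "ulf TYPE('x::metric_space)" and co: "coarse_map (h::'x\<Rightarrow>real)" and a: "a \<in> roe_alg"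
  shows "analytic_for h a"
proof -
  have ba: "bounded_op a" using roe_algD(1)[OF a] .
  obtain r0 where r0: "\<And>x y. a x y \<noteq> 0 \<Longrightarrow> dist x y \<le> r0" using roe_algD(2)[OF a] by blast
  define r where "r = max r0 0"
  have r1: "r + 1 > 0" unfolding r_def by linarith
  have band: "dist x y \<le> r" if "a x y \<noteq> 0" for x y
    using r0[OF that] unfolding r_def by linarith
  obtain s where s: "s > 0" "\<And>x y. dist x y < r + 1 \<Longrightarrow> \<bar>h x - h y\<bar> < s"
    using co r1 unfolding coarse_map_def by blast
  have hb: "\<bar>h x - h y\<bar> \<le> s" if "a x y \<noteq> 0" for x y
    using s(2)[of x y] band[OF that] by linarith
  obtain N where N: "N \<ge> 0" "\<forall>(c::'x\<Rightarrow>'x\<Rightarrow>complex) K. K \<ge> 0 \<longrightarrow> (\<forall>x y. c x y \<noteq> 0 \<longrightarrow> dist x y \<le> r) \<longrightarrow>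
      (\<forall>x y. cmod (c x y) \<le> K) \<longrightarrow> bounded_op c \<and> op_norm c \<le> K * N"
    using band_bounded[OF ulf, of r] by blast
  define A where "A = op_norm a"
  have A0: "A \<ge> 0" using op_norm_nonneg[OF ba] A_def by simp
  have ent: "cmod (a x y) \<le> A" for x y using entry_bound[OF ba] A_def by simp
  have key: "c \<in> roe_alg \<and> bounded_op c \<and> op_norm c \<le> K * N"
    if K: "K \<ge> 0" and nz: "\<And>x y. c x y \<noteq> 0 \<Longrightarrow> a x y \<noteq> 0" and cb: "\<And>x y. cmod (c x y) \<le> K"
    for c :: "'x\<Rightarrow>'x\<Rightarrow>complex" and K
  proof -
    have bd: "\<forall>x y. c x y \<noteq> 0 \<longrightarrow> dist x y \<le> r" using nz band by blast
    have cbb: "\<forall>x y. cmod (c x y) \<le> K" using cb by blast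
    have "bounded_op c \<and> op_norm c \<le> K * N" using N(2) K bd cbb by blast
    moreover have "c \<in> roe_alg" if "bounded_op c"
      by (rule roe_algI[where r=r, OF that]) (use bd in blast)
    ultimately show ?thesis by blast
  qed
  have Fb: "cmod (FF h a z x y) \<le> A * exp (cmod z * s)" for z x y
  proof (cases "a x y = 0")
    case True then show ?thesis by (simp add: FF_alt A0)
  next
    case False
    have "cmod (exp (\<i> * z * of_real (h x - h y))) \<le> exp (cmod z * s)" by (rule expb[OF hb[OF False]])
    then show ?thesis unfolding FF_alt norm_mult using ent[of x y] A0 by (intro mult_mono) auto
  qed
  have Fnz: "a x y \<noteq> 0" if "FF h a z x y \<noteq> 0" for z x y using that by (auto simp: FF_alt)
  have Fin: "FF h a z \<in> uroe" for z
  proof -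
    have "A * exp (cmod z * s) \<ge> 0" using A0 by simp
    moreover have "\<And>x y. FF h a z x y \<noteq> 0 \<Longrightarrow> a x y \<noteq> 0" using Fnz by blast
    moreover have "\<And>x y. cmod (FF h a z x y) \<le> A * exp (cmod z * s)" using Fb by blast
    ultimately have "FF h a z \<in> roe_alg" using key[where c="FF h a z" and K="A * exp (cmod z * s)"] by blast
    then show ?thesis by (rule roe_sub_uroe)
  qed
  have Db: "cmod (DD h a z x y) \<le> s * (A * exp (cmod z * s))" for z x y
  proof (cases "a x y = 0")
    case True then show ?thesis using A0 s(1) by (simp add: DD_def FF_alt)
  next
    case False
    have "cmod (DD h a z x y) = \<bar>h x - h y\<bar> * cmod (FF h a z x y)"
      unfolding DD_def norm_mult by (simp only: norm_of_real norm_ii)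
    also have "\<dots> \<le> s * (A * exp (cmod z * s))" using hb[OF False] Fb[of z x y] by (intro mult_mono) auto
    finally show ?thesis .
  qed
  have Dnz: "a x y \<noteq> 0" if "DD h a z x y \<noteq> 0" for z x y using that by (auto simp: DD_def FF_alt)
  have Din: "DD h a z \<in> uroe" for z
  proof -
    have "s * (A * exp (cmod z * s)) \<ge> 0" using A0 s(1) by simp
    moreover have "\<And>x y. DD h a z x y \<noteq> 0 \<Longrightarrow> a x y \<noteq> 0" using Dnz by blast
    moreover have "\<And>x y. cmod (DD h a z x y) \<le> s * (A * exp (cmod z * s))" using Db by blast
    ultimately have "DD h a z \<in> roe_alg" using key[where c="DD h a z" and K="s * (A * exp (cmod z * s))"] by blast
    then show ?thesis by (rule roe_sub_uroe)
  qed
  define Q where "Q z w = (\<lambda>x y. (FF h a (z + w) x y - FF h a z x y) / w - DD h a z x y)" for z w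
  have Qnz: "a x y \<noteq> 0" if "Q z w x y \<noteq> 0" for z w x y using that by (auto simp: Q_def DD_def FF_alt)
  have Qb: "cmod (Q z w x y) \<le> (A * exp (cmod z * s) * (s^2 * exp s)) * cmod w"
    if w: "w \<noteq> 0" "cmod w \<le> 1" for z w x y
  proof (cases "a x y = 0")
    case True then show ?thesis using A0 by (simp add: Q_def DD_def FF_alt)
  next
    case False
    define d where "d = h x - h y"
    define E where "E = exp (\<i> * z * of_real d)"
    define E2 where "E2 = exp (\<i> * w * of_real d)"
    have e1: "\<i> * (z + w) * of_real d = \<i> * z * of_real d + \<i> * w * of_real d" by (simp add: algebra_simps)
    have e: "exp (\<i> * (z + w) * of_real d) = E * E2" unfolding E_def E2_def by (simp only: e1 exp_add)
    have "Q z w x y = (a x y * (E * E2) - a x y * E) / w - \<i> * of_real d * (a x y * E)"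
      unfolding Q_def DD_def FF_alt d_def[symmetric] e E_def by simp
    also have "\<dots> = (a x y * E) * ((E2 - 1 - \<i> * w * of_real d) / w)"
      using w(1) by (simp add: field_simps)
    finally have eq: "Q z w x y = (a x y * E) * ((E2 - 1 - \<i> * w * of_real d) / w)" .
    have b1: "cmod (a x y * E) \<le> A * exp (cmod z * s)"
      using Fb[of z x y] unfolding FF_alt E_def d_def .
    have b2: "cmod ((E2 - 1 - \<i> * w * of_real d) / w) \<le> cmod w * (s^2 * exp s)"
      unfolding E2_def by (rule quad_bound[OF w(2)]) (use hb[OF False] d_def in simp)
    have "cmod (Q z w x y) \<le> (A * exp (cmod z * s)) * (cmod w * (s^2 * exp s))"
      unfolding eq norm_mult[of "a x y * E"] using b1 b2 A0 by (intro mult_mono) auto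
    then show ?thesis by (simp add: mult_ac)
  qed
  show ?thesis unfolding analytic_for_def
  proof (intro exI[of _ "FF h a"] conjI allI)
    show "FF h a z \<in> uroe" for z by (rule Fin)
    show "FF h a (of_real t) = sigma h t a" for t by (rule FF_real)
    fix z
    define C where "C = A * exp (cmod z * s) * (s^2 * exp s)"
    have C0: "C \<ge> 0" unfolding C_def using A0 by simp
    have lim: "((\<lambda>w. op_norm (Q z w)) \<longlongrightarrow> 0) (at 0)"
    proof (rule tend0[where C="C * N"])
      fix w :: complex assume w: "w \<noteq> 0" "cmod w \<le> 1"
      have "Q z w \<in> roe_alg \<and> bounded_op (Q z w) \<and> op_norm (Q z w) \<le> (C * cmod w) * N"
        by (rule key) (use C0 Qnz Qb[OF w] C_def in auto)
      then show "0 \<le> op_norm (Q z w) \<and> op_norm (Q z w) \<le> C * N * cmod w"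
        using op_norm_nonneg by (auto simp: mult_ac)
    qed
    show "\<exists>D\<in>uroe. ((\<lambda>w. op_norm (\<lambda>x y. (FF h a (z + w) x y - FF h a z x y) / w - D x y)) \<longlongrightarrow> 0) (at 0)"
      using lim Din[of z] unfolding Q_def by blast
  qed
qed



lemma part1:
  assumes hM: "\<forall>x. \<bar>h x\<bar> \<le> M0" and a: "a \<in> uroe"
  shows "analytic_for h a"
proof -
  define M where "M = max M0 0"
  have hb: "\<bar>h x\<bar> \<le> M" for x using hM unfolding M_def by (meson max.coboundedI1)
  have hb': "\<bar>- h x\<bar> \<le> M" for x using hb[of x] by simp
  have M0: "M \<ge> 0" unfolding M_def by simp
  have ub: "cmod (exp (\<i> * z * of_real (h x))) \<le> exp (cmod z * M)" for z x by (rule expb[OF hb])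
  have vb: "cmod (exp (- \<i> * z * of_real (h y))) \<le> exp (cmod z * M)" for z y
  proof -
    have "exp (- \<i> * z * of_real (h y)) = exp (\<i> * z * of_real (- h y))" by simp
    then show ?thesis using expb[OF hb'[of y], of z] by simp
  qed
  have Fin: "FF h a z \<in> uroe" for z
    unfolding FF_def by (rule uroe_scale[OF a ub vb])
  have Fb: "bounded_op (FF h a z)" for z using Fin[of z] by (simp add: uroe_def)
  have ib: "cmod (\<i> * of_real (h x)) \<le> M" for x using hb[of x] by (simp add: norm_mult)
  have ib': "cmod (- \<i> * of_real (h x)) \<le> M" for x using hb[of x] by (simp add: norm_mult)
  have Din: "DD h a z \<in> uroe" for z
  proof -
    have t1: "(\<lambda>x y. (\<i> * of_real (h x)) * FF h a z x y * 1) \<in> uroe"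
      by (rule uroe_scale[OF Fin ib, of _ 1]) simp
    have t2: "(\<lambda>x y. 1 * FF h a z x y * (- \<i> * of_real (h y))) \<in> uroe"
      by (rule uroe_scale[OF Fin _ ib', of _ 1]) simp
    have "(\<lambda>x y. (\<i> * of_real (h x)) * FF h a z x y * 1 + 1 * FF h a z x y * (- \<i> * of_real (h y))) \<in> uroe"
      by (rule uroe_add[OF t1 t2])
    moreover have "(\<lambda>x y. (\<i> * of_real (h x)) * FF h a z x y * 1 + 1 * FF h a z x y * (- \<i> * of_real (h y))) = DD h a z"
      unfolding DD_def by (intro ext) (simp add: algebra_simps)
    ultimately show ?thesis by simp
  qed
  show ?thesis unfolding analytic_for_def
  proof (intro exI[of _ "FF h a"] conjI allI)
    show "FF h a z \<in> uroe" for z by (rule Fin)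
    show "FF h a (of_real t) = sigma h t a" for t by (rule FF_real)
    fix z
    define G where "G = FF h a z"
    have bG: "bounded_op G" unfolding G_def by (rule Fb)
    define Gn where "Gn = op_norm G"
    have Gn0: "Gn \<ge> 0" unfolding Gn_def by (rule op_norm_nonneg[OF bG])
    define C where "C = (M^2 * exp M * exp M + M^2 * exp M + M * (M + M^2 * exp M)) * Gn"
    have lim: "((\<lambda>w. op_norm (\<lambda>x y. (FF h a (z + w) x y - FF h a z x y) / w - DD h a z x y)) \<longlongrightarrow> 0) (at 0)"
    proof (rule tend0[where C=C])
      fix w :: complex assume w: "w \<noteq> 0" "cmod w \<le> 1"
      define al where "al x = exp (\<i> * w * of_real (h x))" for x
      define be where "be y = exp (\<i> * w * of_real (- h y))" for y
      define u1 where "u1 x = (al x - 1 - \<i> * w * of_real (h x)) / w" for x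
      define v2 where "v2 y = (be y - 1 - \<i> * w * of_real (- h y)) / w" for y
      define u3 where "u3 x = \<i> * of_real (h x)" for x
      define v3 where "v3 y = be y - 1" for y
      define t1 where "t1 = (\<lambda>x y. u1 x * G x y * be y)"
      define t2 where "t2 = (\<lambda>x y. (\<lambda>_. 1) x * G x y * v2 y)"
      define t3 where "t3 = (\<lambda>x y. u3 x * G x y * v3 y)"
      have eq: "(\<lambda>x y. (FF h a (z + w) x y - FF h a z x y) / w - DD h a z x y) =
                (\<lambda>x y. t1 x y + (\<lambda>x y. t2 x y + t3 x y) x y)"
      proof (intro ext)
        fix x y
        have "FF h a (z + w) x y = al x * G x y * be y" unfolding al_def be_def G_def by (rule FF_shift)
        then show "(FF h a (z + w) x y - FF h a z x y) / w - DD h a z x y = t1 x y + (\<lambda>x y. t2 x y + t3 x y) x y"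
          using w(1) unfolding t1_def t2_def t3_def u1_def v2_def u3_def v3_def DD_def G_def
          by (simp add: field_simps)
      qed
      have bu1: "cmod (u1 x) \<le> cmod w * (M^2 * exp M)" for x
        unfolding u1_def al_def by (rule quad_bound[OF w(2) hb])
      have bv2: "cmod (v2 y) \<le> cmod w * (M^2 * exp M)" for y
        unfolding v2_def be_def by (rule quad_bound[OF w(2) hb'])
      have bv3: "cmod (v3 y) \<le> cmod w * (M + M^2 * exp M)" for y
        unfolding v3_def be_def by (rule lin_bound[OF w(2) hb'])
      have bbe: "cmod (be y) \<le> exp M" for y
      proof -
        have "cmod (be y) \<le> exp (cmod w * M)" unfolding be_def by (rule expb[OF hb'])
        also have "\<dots> \<le> exp M" using w(2) M0 by (simp add: mult_left_le_one_le)
        finally show ?thesis .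
      qed
      have bu3: "cmod (u3 x) \<le> M" for x unfolding u3_def by (rule ib)
      have one: "cmod ((\<lambda>_. 1::complex) x) \<le> 1" for x by simp
      have T1: "bounded_op t1" "op_norm t1 \<le> cmod w * (M^2 * exp M) * exp M * Gn"
        unfolding t1_def Gn_def by (rule bounded_scale[OF bG bu1 bbe])+
      have T2: "bounded_op t2" "op_norm t2 \<le> 1 * (cmod w * (M^2 * exp M)) * Gn"
        unfolding t2_def Gn_def by (rule bounded_scale[OF bG one bv2])+
      have T3: "bounded_op t3" "op_norm t3 \<le> M * (cmod w * (M + M^2 * exp M)) * Gn"
        unfolding t3_def Gn_def by (rule bounded_scale[OF bG bu3 bv3])+
      have T23: "bounded_op (\<lambda>x y. t2 x y + t3 x y)" "op_norm (\<lambda>x y. t2 x y + t3 x y) \<le> op_norm t2 + op_norm t3"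
        by (rule bounded_add[OF T2(1) T3(1)])+
      have T: "bounded_op (\<lambda>x y. t1 x y + (\<lambda>x y. t2 x y + t3 x y) x y)"
        "op_norm (\<lambda>x y. t1 x y + (\<lambda>x y. t2 x y + t3 x y) x y) \<le> op_norm t1 + op_norm (\<lambda>x y. t2 x y + t3 x y)"
        by (rule bounded_add[OF T1(1) T23(1)])+
      have "op_norm (\<lambda>x y. t1 x y + (\<lambda>x y. t2 x y + t3 x y) x y) \<le>
          cmod w * (M^2 * exp M) * exp M * Gn + 1 * (cmod w * (M^2 * exp M)) * Gn + M * (cmod w * (M + M^2 * exp M)) * Gn"
        using T(2) T23(2) T1(2) T2(2) T3(2) by linarith
      also have "\<dots> = C * cmod w" unfolding C_def by (simp add: algebra_simps)
      finally show "0 \<le> op_norm (\<lambda>x y. (FF h a (z + w) x y - FF h a z x y) / w - DD h a z x y) \<and>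
          op_norm (\<lambda>x y. (FF h a (z + w) x y - FF h a z x y) / w - DD h a z x y) \<le> C * cmod w"
        unfolding eq using op_norm_nonneg[OF T(1)] by simp
    qed
    show "\<exists>D\<in>uroe. ((\<lambda>w. op_norm (\<lambda>x y. (FF h a (z + w) x y - FF h a z x y) / w - D x y)) \<longlongrightarrow> 0) (at 0)"
      using lim Din[of z] by blast
  qed
qed


theorem proposition1p4:
  fixes h :: "'x::metric_space \<Rightarrow> real"
  assumes "ulf TYPE('x)"
  shows "((\<exists>M. \<forall>x. \<bar>h x\<bar> \<le> M) \<longrightarrow> (\<forall>a\<in>uroe. analytic_for h a))
       \<and> (coarse_map h \<longrightarrow> (\<forall>a\<in>roe_alg. analytic_for h a))"
proof (intro conjI impI ballI)
  fix a :: "'x \<Rightarrow> 'x \<Rightarrow> complex" assume "\<exists>M. \<forall>x. \<bar>h x\<bar> \<le> M" "a \<in> uroe"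
  then show "analytic_for h a" using part1 by blast
next
  fix a :: "'x \<Rightarrow> 'x \<Rightarrow> complex" assume "coarse_map h" "a \<in> roe_alg"
  then show "analytic_for h a" using part2[OF assms] by blast
qed

end
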